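(* For every $n \ge 2$, the $n$-crown poset $X_n$ is 2-chain-retractable to the 2-chain, i.e. $X_n \oslash C_2 \cong C_2$ and $X_n \not\cong C_2$, where $C_2$ is the 2-chain.
   Context: The 2-chain $C_2$ is the poset $\{x<y\}$. The $n$-crown poset $X_n$ ($n\ge2$) has elements $a_1,\dots,a_n,b_1,\dots,b_n$ with order relations exactly $a_i<b_j$ for all $i\ne j$ (besides reflexivity). Notation: $\ell(X)$ is the cardinality of a longest chain of a poset $X$. A subset $A$ of a poset $X$ is maximally ordered in $X$ if $|\{(a,b)\in A\times A:a<b\}|$ is maximal among subsets of $X$ of cardinality $|A|$. For $\sigma\in\mathrm{Aut}(P)$, $\Sigma(\sigma)=\{a:\sigma(a)\ne a\}$. For a finite poset $Q$ and $r\ge2$: $\sigma\in\mathrm{Aut}(P)$ is a $(Q,r)$-generator if there exist subsets $S_0,\dots,S_{r-1}\subset\Sigma(\sigma)$, each isomorphic to $Q$, which are smallest maximally ordered subsets of $\Sigma(\sigma)$ with $\sigma(S_i)=S_{(i+1)\bmod r}$, $\ell(S_i)=\ell(\Sigma(\sigma))$, $\bigcup_iS_i=\Sigma(\sigma)$; distinct $S_i,S_j$ are $(Q,r)$-symmetric subsets. Elements $a,b$ are $(Q,r,0)$-symmetric if $a=b$; $(Q,r,1)$-symmetric if there are $(Q,r)$-symmetric subsets $A,B$ with generator $\sigma$, $a\in A$, $b=\sigma^q(a)\in B$, $1\le q<r$; for $n\ge2$, $(Q,r,n)$-symmetric if not $(Q,r,j)$-symmetric for $j<n$ but there exist $c$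 and $j<n$ with $a$ $(Q,r,j)$-symmetric to $c$ and $c$ $(Q,r,n-j)$-symmetric to $b$; $(Q,r)$-symmetric if $(Q,r,n)$-symmetric for some $n\ge0$ (an equivalence relation). $P\oslash_rQ$ is the quotient poset of the equivalence classes with $E\le F$ iff some $e\in E$, $f\in F$ satisfy $e\le f$; $P\oslash Q$ means $P\oslash_2Q$. $P$ is $(Q,r)$-retractable to $\tilde P$ if $P\oslash_rQ\cong\tilde P$ and $P\oslash_rQ\not\cong P$. *)

theory Defs
  imports Main
begin

type_synonym 'a poset = "'a set \<times> ('a \<Rightarrow> 'a \<Rightarrow> bool)"

definition carrier_of :: "'a poset \<Rightarrow> 'a set" where "carrier_of P = fst P"
definition leq :: "'a poset \<Rightarrow> 'a \<Rightarrow> 'a \<Rightarrow> bool" where "leq P = snd P"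
definition less :: "'a poset \<Rightarrow> 'a \<Rightarrow> 'a \<Rightarrow> bool" where
  "less P x y \<longleftrightarrow> leq P x y \<and> x \<noteq> y"

definition induced :: "'a poset \<Rightarrow> 'a set \<Rightarrow> 'a poset" where
  "induced P A = (A, leq P)"

definition poset_iso :: "'a poset \<Rightarrow> 'b poset \<Rightarrow> bool" where
  "poset_iso P P' \<longleftrightarrow> (\<exists>f. bij_betw f (carrier_of P) (carrier_of P') \<and>
     (\<forall>x\<in>carrier_of P. \<forall>y\<in>carrier_of P. leq P x y \<longleftrightarrow> leq P' (f x) (f y)))"

definition aut :: "'a poset \<Rightarrow> ('a \<Rightarrow> 'a) \<Rightarrow> bool" where
  "aut P \<sigma> \<longleftrightarrow> bij_betw \<sigma> (carrier_of P) (carrier_of P) \<and>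
     (\<forall>x\<in>carrier_of P. \<forall>y\<in>carrier_of P. leq P x y \<longleftrightarrow> leq P (\<sigma> x) (\<sigma> y))"

definition moved :: "'a poset \<Rightarrow> ('a \<Rightarrow> 'a) \<Rightarrow> 'a set" where
  "moved P \<sigma> = {a \<in> carrier_of P. \<sigma> a \<noteq> a}"

definition is_chain :: "'a poset \<Rightarrow> 'a set \<Rightarrow> bool" where
  "is_chain P C \<longleftrightarrow> (\<forall>x\<in>C. \<forall>y\<in>C. leq P x y \<or> leq P y x)"

definition chain_len :: "'a poset \<Rightarrow> 'a set \<Rightarrow> nat" where
  "chain_len P A = Max {card C | C. C \<subseteq> A \<and> is_chain P C}"

definition n_rel :: "'a poset \<Rightarrow> 'a set \<Rightarrow> nat" where
  "n_rel P A = card {(a, b). a \<in> A \<and> b \<in> A \<and> less P a b}"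

definition max_ordered :: "'a poset \<Rightarrow> 'a set \<Rightarrow> 'a set \<Rightarrow> bool" where
  "max_ordered P X A \<longleftrightarrow> A \<subseteq> X \<and>
     (\<forall>B. B \<subseteq> X \<and> card B = card A \<longrightarrow> n_rel P B \<le> n_rel P A)"

definition smallest_max_ordered :: "'a poset \<Rightarrow> 'a set \<Rightarrow> 'a set \<Rightarrow> bool" where
  "smallest_max_ordered P X A \<longleftrightarrow> max_ordered P X A \<and> chain_len P A = chain_len P X \<and>
     (\<forall>T. max_ordered P X T \<and> chain_len P T = chain_len P X \<longrightarrow> card A \<le> card T)"

definition generator_family ::
    "'a poset \<Rightarrow> 'b poset \<Rightarrow> nat \<Rightarrow> ('a \<Rightarrow> 'a) \<Rightarrow> (nat \<Rightarrow> 'a set) \<Rightarrow> bool" where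
  "generator_family P Q r \<sigma> S \<longleftrightarrow> 2 \<le> r \<and> aut P \<sigma> \<and>
     (\<forall>i<r. S i \<subseteq> moved P \<sigma> \<and> poset_iso (induced P (S i)) Q \<and>
            smallest_max_ordered P (moved P \<sigma>) (S i) \<and>
            \<sigma> ` S i = S ((i + 1) mod r) \<and>
            chain_len P (S i) = chain_len P (moved P \<sigma>)) \<and>
     (\<Union>i<r. S i) = moved P \<sigma>"

definition sym1 :: "'a poset \<Rightarrow> 'b poset \<Rightarrow> nat \<Rightarrow> 'a \<Rightarrow> 'a \<Rightarrow> bool" where
  "sym1 P Q r a b \<longleftrightarrow> (\<exists>\<sigma> S i j q. generator_family P Q r \<sigma> S \<and> i < r \<and> j < r \<and>
      S i \<noteq> S j \<and> a \<in> S i \<and> b \<in> S j \<and> 1 \<le> q \<and> q < r \<and> b = (\<sigma> ^^ q) a)"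

text \<open>(Q,r)-symmetry: being (Q,r,n)-symmetric for some n; the level-n relations
  (level 0 = equality, level n = composition of lower levels) together give exactly the
  reflexive transitive closure of level 1, restricted to the carrier.\<close>
definition qr_sym :: "'a poset \<Rightarrow> 'b poset \<Rightarrow> nat \<Rightarrow> 'a \<Rightarrow> 'a \<Rightarrow> bool" where
  "qr_sym P Q r a b \<longleftrightarrow> a \<in> carrier_of P \<and> b \<in> carrier_of P \<and> (sym1 P Q r)\<^sup>*\<^sup>* a b"

definition quot :: "'a poset \<Rightarrow> 'b poset \<Rightarrow> nat \<Rightarrow> 'a set poset" where
  "quot P Q r = (carrier_of P // {(a, b). qr_sym P Q r a b},
                 (\<lambda>E F. \<exists>e\<in>E. \<exists>f\<in>F. leq P e f))"

definition retractable :: "'a poset \<Rightarrow> 'b poset \<Rightarrow> nat \<Rightarrow> 'c poset \<Rightarrow> bool" where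
  "retractable P Q r Pt \<longleftrightarrow> poset_iso (quot P Q r) Pt \<and> \<not> poset_iso (quot P Q r) P"

definition chain2 :: "nat poset" where
  "chain2 = ({0, 1}, (\<le>))"

text \<open>The n-crown: (False,i) = a_i, (True,i) = b_i, i = 1..n; a_i < b_j iff i \<noteq> j.\<close>
definition crown :: "nat \<Rightarrow> (bool \<times> nat) poset" where
  "crown n = (UNIV \<times> {1..n},
     (\<lambda>x y. x = y \<or> (\<not> fst x \<and> fst y \<and> snd x \<noteq> snd y)))"

end

theory Submission
  imports Defs
begin

lemma carrier_crown[simp]: "carrier_of (crown n) = UNIV \<times> {1..n}"
  by (simp add: carrier_of_def crown_def)

lemma leq_crown[simp]: "leq (crown n) x y = (x = y \<or> (\<not> fst x \<and> fst y \<and> snd x \<noteq> snd y))"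
  by (simp add: leq_def crown_def)

lemma less_crown[simp]: "less (crown n) x y = (\<not> fst x \<and> fst y \<and> snd x \<noteq> snd y)"
  by (auto simp: less_def)

lemma chain_card_le2: "is_chain (crown n) C \<Longrightarrow> card C \<le> 2"
proof -
  assume c: "is_chain (crown n) C"
  have "inj_on fst C"
  proof (rule inj_onI)
    fix x y assume "x \<in> C" "y \<in> C" "fst x = fst y"
    then show "x = y" using c unfolding is_chain_def by auto
  qed
  then have "card C = card (fst ` C)" by (simp add: card_image)
  also have "\<dots> \<le> card (UNIV :: bool set)" by (rule card_mono) auto
  finally show ?thesis by simp
qed

lemma chain_len_2:
  assumes "finite A" "(False,p) \<in> A" "(True,q) \<in> A" "p \<noteq> q"
  shows "chain_len (crown n) A = 2"
proof -
  let ?S = "{card C |C. C \<subseteq> A \<and> is_chain (crown n) C}"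
  have sub: "?S \<subseteq> {..2}" using chain_card_le2 by auto
  have fin: "finite ?S" using finite_subset[OF sub] by simp
  have h1: "{(False,p),(True,q)} \<subseteq> A" using assms by simp
  have h2: "is_chain (crown n) {(False,p),(True,q)}"
    using assms by (simp add: is_chain_def)
  have h3: "card {(False,p),(True,q)} = 2" by simp
  have "2 \<in> ?S" using h1 h2 h3[symmetric]
    by (intro CollectI exI[of _ "{(False,p),(True,q)}"] conjI) assumption+
  have le: "\<And>y. y \<in> ?S \<Longrightarrow> y \<le> 2" using sub by (meson atMost_iff subsetD)
  show ?thesis unfolding chain_len_def
    by (rule Max_eqI[OF fin le \<open>2 \<in> ?S\<close>])
qed

lemma chain_len_le_card:
  assumes "finite T" shows "chain_len (crown n) T \<le> card T"
proof -
  let ?S = "{card C |C. C \<subseteq> T \<and> is_chain (crown n) C}"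
  have sub: "?S \<subseteq> {..card T}" using assms by (auto intro: card_mono)
  have fin: "finite ?S" using finite_subset[OF sub] by simp
  have "{} \<subseteq> T \<and> is_chain (crown n) {}" by (simp add: is_chain_def)
  then have ne: "?S \<noteq> {}" by blast
  have le: "\<And>y. y \<in> ?S \<Longrightarrow> y \<le> card T" using sub by (meson atMost_iff subsetD)
  show ?thesis unfolding chain_len_def
    by (rule Max.boundedI[OF fin ne le])
qed

lemma n_rel_le1:
  assumes "card B = 2" shows "n_rel (crown n) B \<le> 1"
proof -
  obtain x y where B: "B = {x,y}" "x \<noteq> y" using assms card_2_iff by metis
  let ?R = "{(a, b). a \<in> B \<and> b \<in> B \<and> less (crown n) a b}"
  have "?R \<subseteq> (if fst x then {(y,x)} else {(x,y)})" using B by auto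
  then have "card ?R \<le> card (if fst x then {(y,x)} else {(x,y)})"
    by (intro card_mono) auto
  then show ?thesis unfolding n_rel_def by (simp split: if_splits)
qed

lemma n_rel_pair:
  assumes "p \<noteq> q" shows "n_rel (crown n) {(False,p),(True,q)} = 1"
proof -
  have "{(a, b). a \<in> {(False,p),(True,q)} \<and> b \<in> {(False,p),(True,q)} \<and> less (crown n) a b}
        = {((False,p),(True,q))}" using assms by auto
  then show ?thesis unfolding n_rel_def by simp
qed

definition sw :: "nat \<Rightarrow> nat \<Rightarrow> nat \<Rightarrow> nat" where
  "sw i j k = (if k = i then j else if k = j then i else k)"

definition sg :: "nat \<Rightarrow> nat \<Rightarrow> bool \<times> nat \<Rightarrow> bool \<times> nat" where
  "sg i j x = (fst x, sw i j (snd x))"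

lemma sw_inv[simp]: "sw i j (sw i j k) = k" by (auto simp: sw_def)
lemma sw_eq[simp]: "(sw i j a = sw i j b) = (a = b)" by (auto simp: sw_def)

lemma sg_aut:
  assumes "i \<in> {1..n}" "j \<in> {1..n}"
  shows "aut (crown n) (sg i j)"
  unfolding aut_def
proof
  show "bij_betw (sg i j) (carrier_of (crown n)) (carrier_of (crown n))"
    by (rule bij_betw_byWitness[where f'="sg i j"]) (use assms in \<open>auto simp: sg_def sw_def\<close>)
  show "\<forall>x\<in>carrier_of (crown n). \<forall>y\<in>carrier_of (crown n).
      leq (crown n) x y = leq (crown n) (sg i j x) (sg i j y)"
    by (auto simp: sg_def prod_eq_iff)
qed

definition fam :: "nat \<Rightarrow> nat \<Rightarrow> nat \<Rightarrow> (bool \<times> nat) set" where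
  "fam i j k = (if k = 0 then {(False,i),(True,j)} else {(False,j),(True,i)})"

lemma iso_pair:
  assumes "p \<noteq> q" shows "poset_iso (induced (crown n) {(False,p),(True,q)}) chain2"
  unfolding poset_iso_def
proof (intro exI[of _ "\<lambda>x. if fst x then 1 else 0 :: nat"] conjI)
  show "bij_betw (\<lambda>x. if fst x then 1 else 0 :: nat) (carrier_of (induced (crown n) {(False, p), (True, q)}))
     (carrier_of chain2)"
    by (auto simp: bij_betw_def inj_on_def induced_def carrier_of_def chain2_def)
  show "\<forall>x\<in>carrier_of (induced (crown n) {(False, p), (True, q)}).
       \<forall>y\<in>carrier_of (induced (crown n) {(False, p), (True, q)}).
          leq (induced (crown n) {(False, p), (True, q)}) x y =
          leq chain2 (if fst x then 1 else 0) (if fst y then 1 else 0)"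
    using assms by (auto simp: induced_def carrier_of_def leq_def crown_def chain2_def)
qed

lemma gen_fam:
  assumes "i \<in> {1..n}" "j \<in> {1..n}" "i \<noteq> j"
  shows "generator_family (crown n) chain2 2 (sg i j) (fam i j)"
proof -
  let ?M = "{(False,i),(False,j),(True,i),(True,j)}"
  have mv: "moved (crown n) (sg i j) = ?M"
    using assms by (auto simp: moved_def sg_def sw_def)
  have finM: "finite ?M" by simp
  have clM: "chain_len (crown n) ?M = 2" by (rule chain_len_2[OF finM, of i j]) (use assms in auto)
  have key: "S \<subseteq> moved (crown n) (sg i j) \<and> poset_iso (induced (crown n) S) chain2 \<and>
            smallest_max_ordered (crown n) (moved (crown n) (sg i j)) S \<and>
            chain_len (crown n) S = chain_len (crown n) (moved (crown n) (sg i j))"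
    if S: "S = {(False,p),(True,q)}" "p \<noteq> q" "p \<in> {i,j}" "q \<in> {i,j}" for S p q
  proof -
    have sub: "S \<subseteq> ?M" using S by auto
    have clS: "chain_len (crown n) S = 2" using S by (intro chain_len_2[of _ p q]) auto
    have cS: "card S = 2" using S by simp
    have mo: "max_ordered (crown n) ?M S"
      unfolding max_ordered_def using sub cS n_rel_le1 n_rel_pair[OF S(2)] S(1) by auto
    have sm: "card S \<le> card T" if "max_ordered (crown n) ?M T" "chain_len (crown n) T = chain_len (crown n) ?M" for T
    proof -
      have "T \<subseteq> ?M" using that unfolding max_ordered_def by blast
      then have "finite T" using finite_subset by blast
      then have "chain_len (crown n) T \<le> card T" by (rule chain_len_le_card)
      then show ?thesis using that(2) clM cS by simp
    qed
    show ?thesis unfolding mv smallest_max_ordered_def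
      using sub iso_pair[OF S(2)] S(1) clS clM mo sm by auto
  qed
  have lt2: "k < 2 \<Longrightarrow> k = 0 \<or> k = (1::nat)" for k by arith
  show ?thesis unfolding generator_family_def
  proof (intro conjI allI impI)
    show "2 \<le> (2::nat)" by simp
    show "aut (crown n) (sg i j)" using sg_aut assms by blast
  next
    fix k :: nat assume "k < 2"
    then have k: "k = 0 \<or> k = 1" by arith
    have A: "fam i j k = {(False, if k = 0 then i else j), (True, if k = 0 then j else i)}"
      by (auto simp: fam_def)
    have K: "fam i j k \<subseteq> moved (crown n) (sg i j) \<and> poset_iso (induced (crown n) (fam i j k)) chain2 \<and>
            smallest_max_ordered (crown n) (moved (crown n) (sg i j)) (fam i j k) \<and>
            chain_len (crown n) (fam i j k) = chain_len (crown n) (moved (crown n) (sg i j))"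
      by (rule key[OF A]) (use k assms in auto)
    show "fam i j k \<subseteq> moved (crown n) (sg i j)" using K by blast
    show "poset_iso (induced (crown n) (fam i j k)) chain2" using K by blast
    show "smallest_max_ordered (crown n) (moved (crown n) (sg i j)) (fam i j k)" using K by blast
    show "chain_len (crown n) (fam i j k) = chain_len (crown n) (moved (crown n) (sg i j))" using K by blast
    show "sg i j ` fam i j k = fam i j ((k + 1) mod 2)"
      using k assms by (auto simp: fam_def sg_def sw_def)
  next
    have e2: "{..<2::nat} = {0,1}" by auto
    have "(\<Union>k<2. fam i j k) = fam i j 0 \<union> fam i j 1"
      unfolding e2 by simp
    then show "(\<Union>k<2. fam i j k) = moved (crown n) (sg i j)" unfolding mv by (auto simp: fam_def)
  qed
qed

lemma sym1_same:
  assumes "x \<in> carrier_of (crown n)" "y \<in> carrier_of (crown n)" "fst x = fst y" "x \<noteq> y"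
  shows "sym1 (crown n) chain2 2 x y"
proof (cases "fst x")
  case False
  obtain a b where x: "x = (False,a)" and y: "y = (False,b)" using False assms
    by (metis prod.collapse)
  have ab: "a \<noteq> b" "a \<in> {1..n}" "b \<in> {1..n}" using assms x y by auto
  have "fam a b 0 \<noteq> fam a b 1" using ab by (auto simp: fam_def)
  moreover have "y = (sg a b ^^ 1) x" using x y by (simp add: sg_def sw_def)
  ultimately show ?thesis unfolding sym1_def
    using gen_fam[OF ab(2,3,1)] x y
    by (intro exI[of _ "sg a b"] exI[of _ "fam a b"] exI[of _ 0] exI[of _ 1] exI[of _ 1])
       (auto simp: fam_def)
next
  case True
  obtain a b where x: "x = (True,a)" and y: "y = (True,b)" using True assms
    by (metis prod.collapse)
  have ab: "b \<noteq> a" "b \<in> {1..n}" "a \<in> {1..n}" using assms x y by auto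
  have "fam b a 0 \<noteq> fam b a 1" using ab by (auto simp: fam_def)
  moreover have "y = (sg b a ^^ 1) x" using x y by (simp add: sg_def sw_def)
  ultimately show ?thesis unfolding sym1_def
    using gen_fam[OF ab(2,3,1)] x y
    by (intro exI[of _ "sg b a"] exI[of _ "fam b a"] exI[of _ 0] exI[of _ 1] exI[of _ 1])
       (auto simp: fam_def)
qed

lemma aut_fst:
  assumes n: "2 \<le> n" and a: "aut (crown n) \<sigma>" and x: "x \<in> carrier_of (crown n)"
  shows "fst (\<sigma> x) = fst x \<and> \<sigma> x \<in> carrier_of (crown n)"
proof -
  have bij: "bij_betw \<sigma> (carrier_of (crown n)) (carrier_of (crown n))" and
    pres: "\<forall>x\<in>carrier_of (crown n). \<forall>y\<in>carrier_of (crown n).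
      leq (crown n) x y = leq (crown n) (\<sigma> x) (\<sigma> y)" using a unfolding aut_def by auto
  have inj: "inj_on \<sigma> (carrier_of (crown n))" using bij by (rule bij_betw_imp_inj_on)
  have inC: "\<sigma> x \<in> carrier_of (crown n)" by (rule bij_betw_apply[OF bij x])
  obtain s k where xs: "x = (s,k)" by force
  have k: "k \<in> {1..n}" using x xs by auto
  define j where "j = (if k = 1 then 2 else 1::nat)"
  have j: "j \<in> {1..n}" "j \<noteq> k" using n k by (auto simp: j_def)
  have "fst (\<sigma> x) = s"
  proof (cases s)
    case False
    have c1: "(False,k) \<in> carrier_of (crown n)" "(True,j) \<in> carrier_of (crown n)" using k j by auto
    have "leq (crown n) (False,k) (True,j)" using j by simp
    then have l: "leq (crown n) (\<sigma> (False,k)) (\<sigma> (True,j))"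
      using iffD1[OF bspec[OF bspec[OF pres c1(1)] c1(2)]] by blast
    show ?thesis
    proof (rule ccontr)
      assume "fst (\<sigma> x) \<noteq> s"
      then have "fst (\<sigma> (False,k))" using False xs by simp
      then have "\<sigma> (False,k) = \<sigma> (True,j)" using l by auto
      then have "(False,k) = (True,j)" by (rule inj_onD[OF inj _ c1(1) c1(2)])
      then show False by simp
    qed
  next
    case True
    have c1: "(False,j) \<in> carrier_of (crown n)" "(True,k) \<in> carrier_of (crown n)" using k j by auto
    have "leq (crown n) (False,j) (True,k)" using j by simp
    then have l: "leq (crown n) (\<sigma> (False,j)) (\<sigma> (True,k))"
      using iffD1[OF bspec[OF bspec[OF pres c1(1)] c1(2)]] by blast
    show ?thesis
    proof (rule ccontr)
      assume "fst (\<sigma> x) \<noteq> s"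
      then have "\<not> fst (\<sigma> (True,k))" using True xs by simp
      then have "\<sigma> (False,j) = \<sigma> (True,k)" using l by auto
      then have "(False,j) = (True,k)" by (rule inj_onD[OF inj _ c1(1) c1(2)])
      then show False by simp
    qed
  qed
  then show ?thesis using inC xs by simp
qed

lemma aut_pow_fst:
  assumes n: "2 \<le> n" and a: "aut (crown n) \<sigma>" and x: "x \<in> carrier_of (crown n)"
  shows "fst ((\<sigma> ^^ q) x) = fst x \<and> (\<sigma> ^^ q) x \<in> carrier_of (crown n)"
proof (induction q)
  case 0 then show ?case using x by simp
next
  case (Suc q) then show ?case using aut_fst[OF n a, of "(\<sigma> ^^ q) x"] by simp
qed

lemma sym1_fst:
  assumes n: "2 \<le> n" and s: "sym1 (crown n) chain2 2 x y"
  shows "fst x = fst y"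
proof -
  obtain \<sigma> S i j q where g: "generator_family (crown n) chain2 2 \<sigma> S" and
    ij: "i < 2" "x \<in> S i" and y: "y = (\<sigma> ^^ q) x"
    using s unfolding sym1_def by blast
  have a: "aut (crown n) \<sigma>" using g unfolding generator_family_def by blast
  have "S i \<subseteq> moved (crown n) \<sigma>" using g ij unfolding generator_family_def by blast
  then have "x \<in> carrier_of (crown n)" using ij unfolding moved_def by auto
  then show ?thesis using aut_pow_fst[OF n a] y by simp
qed

lemma qr_sym_iff:
  assumes n: "2 \<le> n"
  shows "qr_sym (crown n) chain2 2 x y \<longleftrightarrow>
     x \<in> carrier_of (crown n) \<and> y \<in> carrier_of (crown n) \<and> fst x = fst y"
proof
  assume h: "qr_sym (crown n) chain2 2 x y"
  have "(sym1 (crown n) chain2 2)\<^sup>*\<^sup>* x y" using h unfolding qr_sym_def by blast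
  then have "fst x = fst y"
    by (induction rule: rtranclp_induct) (auto dest: sym1_fst[OF n])
  then show "x \<in> carrier_of (crown n) \<and> y \<in> carrier_of (crown n) \<and> fst x = fst y"
    using h unfolding qr_sym_def by blast
next
  assume h: "x \<in> carrier_of (crown n) \<and> y \<in> carrier_of (crown n) \<and> fst x = fst y"
  show "qr_sym (crown n) chain2 2 x y"
  proof (cases "x = y")
    case True then show ?thesis using h unfolding qr_sym_def by simp
  next
    case False then show ?thesis using h sym1_same[of x n y] unfolding qr_sym_def by auto
  qed
qed

lemma quot_carrier:
  assumes n: "2 \<le> n"
  shows "carrier_of (quot (crown n) chain2 2) = {{False} \<times> {1..n}, {True} \<times> {1..n}}"
proof -
  have cls: "{(a, b). qr_sym (crown n) chain2 2 a b} `` {x} = {fst x} \<times> {1..n}"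
    if "x \<in> carrier_of (crown n)" for x
    using that by (auto simp: qr_sym_iff[OF n])
  have ne: "{1..n} \<noteq> {}" using n by auto
  then obtain k where k: "k \<in> {1..n}" by blast
  show ?thesis
    unfolding quot_def carrier_of_def[of "(_, _)"] fst_conv quotient_def
    using cls k by (auto simp: carrier_of_def crown_def)
qed

lemma iso_card: "poset_iso P P' \<Longrightarrow> card (carrier_of P) = card (carrier_of P')"
  unfolding poset_iso_def using bij_betw_same_card by blast

lemma card_crown: "card (carrier_of (crown n)) = 2 * n"
  by (simp add: card_cartesian_product)

theorem mainTheorem6:
  fixes n :: nat
  assumes "2 \<le> n"
  shows "retractable (crown n) chain2 2 chain2 \<and> \<not> poset_iso (crown n) chain2"
proof -
  let ?A = "{False} \<times> {1..n}" and ?B = "{True} \<times> {1..n}"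
  have l12: "(False, 1) \<in> ?A" "(True, 2) \<in> ?B" using assms by auto
  have qc: "carrier_of (quot (crown n) chain2 2) = {?A, ?B}" by (rule quot_carrier[OF assms])
  have nb: "(False,1) \<notin> ?B" by simp
  have AB: "?A \<noteq> ?B"
  proof
    assume "?A = ?B"
    then show False using l12(1) nb by simp
  qed
  have cq: "card (carrier_of (quot (crown n) chain2 2)) = 2" using qc AB by simp
  have lq: "leq (quot (crown n) chain2 2) E F = (\<exists>e\<in>E. \<exists>f\<in>F. leq (crown n) e f)" for E F
    by (simp add: quot_def leq_def[of "(_, _)"])
  have iso: "poset_iso (quot (crown n) chain2 2) chain2"
    unfolding poset_iso_def qc
  proof (intro exI[of _ "\<lambda>E. if E = ?A then 0 else 1 :: nat"] conjI)
    show "bij_betw (\<lambda>E. if E = ?A then 0 else 1 :: nat) {?A, ?B} (carrier_of chain2)"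
      using AB by (simp add: bij_betw_def carrier_of_def chain2_def AB AB[symmetric] insert_commute)
    have q1: "leq (quot (crown n) chain2 2) ?A ?B" unfolding lq
      by (rule bexI[OF bexI[OF _ l12(2)] l12(1)]) simp
    have q2: "\<not> leq (quot (crown n) chain2 2) ?B ?A" unfolding lq by auto
    have q3: "leq (quot (crown n) chain2 2) ?A ?A" unfolding lq
      by (rule bexI[OF bexI[OF _ l12(1)] l12(1)]) simp
    have q4: "leq (quot (crown n) chain2 2) ?B ?B" unfolding lq
      by (rule bexI[OF bexI[OF _ l12(2)] l12(2)]) simp
    have c: "leq chain2 a b = (a \<le> b)" for a b by (simp add: chain2_def leq_def)
    show "\<forall>x\<in>{?A, ?B}. \<forall>y\<in>{?A, ?B}. leq (quot (crown n) chain2 2) x y =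
        leq chain2 (if x = ?A then 0 else 1) (if y = ?A then 0 else 1)"
    proof (intro ballI)
      fix x y assume x: "x \<in> {?A, ?B}" and y: "y \<in> {?A, ?B}"
      show "leq (quot (crown n) chain2 2) x y =
        leq chain2 (if x = ?A then 0 else 1) (if y = ?A then 0 else 1)"
        unfolding c using x y q1 q2 q3 q4 AB by (elim insertE emptyE) simp_all
    qed
  qed
  have cc: "card (carrier_of (crown n)) \<noteq> 2" using card_crown[of n] assms by simp
  have n1: "\<not> poset_iso (quot (crown n) chain2 2) (crown n)"
  proof
    assume "poset_iso (quot (crown n) chain2 2) (crown n)"
    from iso_card[OF this] show False using cq cc by simp
  qed
  have c2: "card (carrier_of chain2) = 2" by (simp add: chain2_def carrier_of_def)
  have n2: "\<not> poset_iso (crown n) chain2"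
  proof
    assume "poset_iso (crown n) chain2"
    from iso_card[OF this] show False using c2 cc by simp
  qed
  show ?thesis using iso n1 n2 unfolding retractable_def by blast
qed

end
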